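(* Let $\mathcal I$ be a canonical instance and run Algorithm 1 (described below) on it. At every moment of the run, every agent $a_{i,j}$ satisfies $v_{i,j}(A_{i,j})\le 3w_i$; in particular the final bundles satisfy $v_{i,j}(A_{i,j})\le 3w_i$. (Algorithm 1: start with empty bundles and all agents present; for $h=1,\dots,m$: let $\mathcal N_h$ be the present agents $a_{i,j}$ with $v_{i,j}(e_h)\le w_i$; give $e_h$ to an agent of $\mathcal N_h$ minimizing $v_{i,j}(e_h)$, ties broken in favor of the smallest weight and then arbitrarily; if the receiver now has $v_{i,j}(A_{i,j})\ge 3w_i$, she is removed from the present agents.)
   Context: Chore-allocation instance: agents, a finite set $\mathcal M=\{e_1,\dots,e_m\}$ of indivisible items, positive weights, additive cost functions $v:2^{\mathcal M}\to\mathbb R_{\ge0}$. The weighted maximin share of agent $a$ with weight $w_a$ and cost $v_a$ is $\mathsf{WMMS}_a=w_a\min_{\text{allocations }(B_b)_b}\max_{b}\frac{v_a(B_b)}{w_b}$, allocations being ordered partitions of $\mathcal M$ into one (possibly empty) bundle per agent. An instance is canonical if: (i) $\max$ weight is $w_1$, weights sum to $1$, and every weight equals $w_1/2^p$ for some nonnegative integer $p$; (ii) every agent's total cost $v(\mathcal M)=1$, and every single-item cost is either $0$ or $w_1/2^p$ for some nonnegative integer $p$; (iii) every agent has $v(e_1)\ge\cdots\ge v(e_m)$; (iv) every agent's $\mathsf{WMMS}$ equals her weight. Agents are partitioned into groups $G_1,\dots,G_k$ by weight, all agents of $G_i$ having weight $w_i$, with $w_1>\cdots>w_k$; $G_i=\{a_{i,1},\dots,a_{i,n_i}\}$,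 and $v_{i,j},A_{i,j}$ denote the cost function and current bundle of $a_{i,j}$. *)

theory Defs
  imports Complex_Main "HOL-Library.FuncSet"
begin

(* Agents form a finite set N of type 'a; items are e_1..e_m, represented by the
naturals 1..m. *)

definition cost :: "('a \<Rightarrow> nat \<Rightarrow> real) \<Rightarrow> 'a \<Rightarrow> nat set \<Rightarrow> real" where
  "cost v a B = (\<Sum>e\<in>B. v a e)"

(* An allocation is a map from items {1..m} to agents in N (extensional);
the bundle_of of agent b is the preimage of b. *)

definition bundle_of :: "(nat \<Rightarrow> 'a) \<Rightarrow> nat \<Rightarrow> 'a \<Rightarrow> nat set" where
  "bundle_of B m b = {e \<in> {1..m}. B e = b}"

definition WMMS :: "'a set \<Rightarrow> ('a \<Rightarrow> real) \<Rightarrow> ('a \<Rightarrow> nat \<Rightarrow> real) \<Rightarrow> nat \<Rightarrow> 'a \<Rightarrow> real" where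
  "WMMS N w v m a = w a * Min ((\<lambda>B. MAX b\<in>N. cost v a (bundle_of B m b) / w b) ` ({1..m} \<rightarrow>\<^sub>E N))"

definition canonical :: "'a set \<Rightarrow> ('a \<Rightarrow> real) \<Rightarrow> ('a \<Rightarrow> nat \<Rightarrow> real) \<Rightarrow> nat \<Rightarrow> bool" where
  "canonical N w v m \<longleftrightarrow>
     finite N \<and> N \<noteq> {} \<and> (\<forall>a\<in>N. w a > 0) \<and>
     (\<Sum>a\<in>N. w a) = 1 \<and>
     (\<forall>a\<in>N. \<exists>p::nat. w a = Max (w ` N) / 2 ^ p) \<and>
     (\<forall>a\<in>N. cost v a {1..m} = 1) \<and>
     (\<forall>a\<in>N. \<forall>e\<in>{1..m}. v a e = 0 \<or> (\<exists>p::nat. v a e = Max (w ` N) / 2 ^ p)) \<and>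
     (\<forall>a\<in>N. \<forall>e e'. 1 \<le> e \<longrightarrow> e \<le> e' \<longrightarrow> e' \<le> m \<longrightarrow> v a e' \<le> v a e) \<and>
     (\<forall>a\<in>N. WMMS N w v m a = w a)"

(* Reachable states of Algorithm 1: (h, A, P) where h items e_1..e_h have been
processed, A is the current bundle_of map and P the set of present agents.
Ties among minimisers of the item cost are broken in favour of the smallest weight,
and then arbitrarily (nondeterminism). *)

inductive alg1_reach :: "'a set \<Rightarrow> ('a \<Rightarrow> real) \<Rightarrow> ('a \<Rightarrow> nat \<Rightarrow> real) \<Rightarrow> nat
    \<Rightarrow> nat \<Rightarrow> ('a \<Rightarrow> nat set) \<Rightarrow> 'a set \<Rightarrow> bool"
  for N w v m where
  init: "alg1_reach N w v m 0 (\<lambda>_. {}) N"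
| step: "\<lbrakk> alg1_reach N w v m h A P; h < m;
          b \<in> P; v b (Suc h) \<le> w b;
          \<forall>c\<in>P. v c (Suc h) \<le> w c \<longrightarrow> v b (Suc h) \<le> v c (Suc h);
          \<forall>c\<in>P. v c (Suc h) \<le> w c \<longrightarrow> v c (Suc h) = v b (Suc h) \<longrightarrow> w b \<le> w c \<rbrakk>
        \<Longrightarrow> alg1_reach N w v m (Suc h) (A(b := insert (Suc h) (A b)))
              (if cost v b (insert (Suc h) (A b)) \<ge> 3 * w b then P - {b} else P)"

end

theory Submission
  imports Defs
begin

lemma mult_of:
  fixes M :: real
  assumes "0 < M" "M / 2 ^ p \<le> M / 2 ^ q"
  shows "\<exists>n::nat. M / 2 ^ q = real n * (M / 2 ^ p)"
proof -
  have "q \<le> p"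
  proof (rule ccontr)
    assume "\<not> q \<le> p"
    then have "(2::real) ^ p < 2 ^ q" by (simp add: power_strict_increasing)
    then have "M / 2 ^ q < M / 2 ^ p" using assms(1)
      by (simp add: divide_strict_left_mono)
    then show False using assms(2) by simp
  qed
  have "(2::real) ^ p = 2 ^ (p - q) * 2 ^ q" using \<open>q \<le> p\<close>
    by (simp add: power_add[symmetric])
  then have "M / 2 ^ q = real (2 ^ (p - q)) * (M / 2 ^ p)" by simp
  then show ?thesis by blast
qed

lemma sum_mult_of:
  assumes "finite B" "\<forall>e\<in>B. \<exists>n::nat. g e = real n * x"
  shows "\<exists>n::nat. sum g B = real n * (x::real)"
  using assms
proof (induction B rule: finite_induct)
  case empty
  then show ?case by (intro exI[of _ 0]) simp
next
  case (insert e F)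
  then obtain n where n: "sum g F = real n * x" by auto
  obtain k where k: "g e = real k * x" using insert by auto
  have "sum g (insert e F) = real (k + n) * x"
    using insert n k by (simp add: algebra_simps)
  then show ?case by blast
qed

lemma inv:
  assumes can: "canonical N w v m" and r: "alg1_reach N w v m h A P"
  shows "P \<subseteq> N \<and> (\<forall>a. A a \<subseteq> {1..h}) \<and> (\<forall>a\<in>P. cost v a (A a) < 3 * w a)
     \<and> (\<forall>a\<in>N. cost v a (A a) \<le> 3 * w a)"
  using r
proof (induction rule: alg1_reach.induct)
  case init
  then show ?case using can by (auto simp: canonical_def cost_def)
next
  case (step h A P b)
  define e where "e = Suc h"
  have bN: "b \<in> N" using step by auto
  have fin: "finite N" and wpos: "\<forall>a\<in>N. w a > 0" using can by (auto simp: canonical_def)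
  define M where "M = Max (w ` N)"
  have Mge: "w b \<le> M" unfolding M_def using fin bN by simp
  have Mpos: "0 < M" using Mge wpos bN by force
  have Ab: "A b \<subseteq> {1..h}" using step by auto
  have fA: "finite (A b)" using Ab finite_subset by blast
  have eA: "e \<notin> A b" using Ab e_def by auto
  have cb: "cost v b (A b) < 3 * w b" using step by auto
  have key: "cost v b (insert e (A b)) \<le> 3 * w b"
  proof -
    have c: "cost v b (insert e (A b)) = v b e + cost v b (A b)"
      using fA eA by (simp add: cost_def)
    have em: "e \<in> {1..m}" using step e_def by auto
    show ?thesis
    proof (cases "v b e = 0")
      case True
      then show ?thesis using c cb by simp
    next
      case False
      then obtain p :: nat where p: "v b e = M / 2 ^ p"
        using can bN em unfolding canonical_def M_def by blast
      have xpos: "0 < M / 2 ^ p" using Mpos by simp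
      obtain q :: nat where q: "w b = M / 2 ^ q"
        using can bN unfolding canonical_def M_def by blast
      have "v b e \<le> w b" using step e_def by simp
      then obtain n0 :: nat where n0: "w b = real n0 * (M / 2 ^ p)"
        using mult_of[OF Mpos, of p q] p q by auto
      define n where "n = n0"
      have n: "3 * w b = real (3 * n) * (M / 2 ^ p)" using n0 n_def by simp
      have "\<forall>e'\<in>A b. \<exists>k::nat. v b e' = real k * (M / 2 ^ p)"
      proof
        fix e' assume e': "e' \<in> A b"
        have "1 \<le> e'" "e' \<le> e" "e \<le> m" using e' Ab em e_def by auto
        then have le: "v b e \<le> v b e'" using can bN unfolding canonical_def by blast
        have "e' \<in> {1..m}" using \<open>1 \<le> e'\<close> \<open>e' \<le> e\<close> \<open>e \<le> m\<close> by auto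
        then have "v b e' = 0 \<or> (\<exists>p'::nat. v b e' = M / 2 ^ p')"
          using can bN unfolding canonical_def M_def by blast
        moreover have "v b e' \<noteq> 0" using le p xpos by auto
        ultimately obtain p' :: nat where p': "v b e' = M / 2 ^ p'" by blast
        show "\<exists>k::nat. v b e' = real k * (M / 2 ^ p)"
          using mult_of[OF Mpos, of p p'] le p p' by auto
      qed
      then obtain k :: nat where k: "cost v b (A b) = real k * (M / 2 ^ p)"
        using sum_mult_of[OF fA] unfolding cost_def by blast
      have "real k < real (3 * n)" using cb k n xpos
        by (metis mult_less_cancel_right_pos)
      then have "k < 3 * n" by linarith
      then have "real k + 1 \<le> real (3 * n)" by linarith
      then have "(real k + 1) * (M / 2 ^ p) \<le> real (3 * n) * (M / 2 ^ p)"
        using xpos by (intro mult_right_mono) auto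
      then have "M / 2 ^ p + real k * (M / 2 ^ p) \<le> 3 * w b" using n by (simp add: algebra_simps add_divide_distrib)
      then show ?thesis using c k p by simp
    qed
  qed
  show ?case
  proof (intro conjI)
    show "(if 3 * w b \<le> cost v b (insert (Suc h) (A b)) then P - {b} else P) \<subseteq> N"
      using step by auto
    show "\<forall>a. (A(b := insert (Suc h) (A b))) a \<subseteq> {1..Suc h}"
    proof
      fix a
      have "A a \<subseteq> {1..h}" using step by blast
      then show "(A(b := insert (Suc h) (A b))) a \<subseteq> {1..Suc h}"
        using Ab by auto
    qed
    show "\<forall>a\<in>(if 3 * w b \<le> cost v b (insert (Suc h) (A b)) then P - {b} else P).
        cost v a ((A(b := insert (Suc h) (A b))) a) < 3 * w a"
      using step e_def by auto
    show "\<forall>a\<in>N. cost v a ((A(b := insert (Suc h) (A b))) a) \<le> 3 * w a"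
      using step key e_def by auto
  qed
qed

theorem mainTheorem8:
  fixes N :: "'a set" and w :: "'a \<Rightarrow> real" and v :: "'a \<Rightarrow> nat \<Rightarrow> real" and m :: nat
  assumes "canonical N w v m"
    and "alg1_reach N w v m h A P"
    and "a \<in> N"
  shows "cost v a (A a) \<le> 3 * w a"
  using inv[OF assms(1,2)] assms(3) by blast

end
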